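(* Let $l,m,k$ be non-negative integers with $2l\le m\le 2k$. Then $$S(k,m,l)=\binom{m}{l}\binom{2k-m+1}{k-m+l}+\sum_{d'=0}^{l-1}\binom{m}{d'}\left[\binom{2k-m+1}{k+1-d'}-\binom{2k-m+1}{k-d'}\right].$$
   Context: A Dyck path of semilength $k$ (Dyck $k$-path) is a lattice path in $\mathbb{Z}^2$ starting at $(0,0)$, ending at $(2k,0)$, never going below the $x$-axis, each of whose $2k$ steps is either a rise $(1,1)$ or a fall $(1,-1)$. For a Dyck $k$-path $D$ and non-negative integers $l\le m\le 2k$, $S(D,m,l)$ denotes the number of intervals of length $m$ in $D$ (i.e. blocks of $m$ consecutive steps of $D$, one for each starting position $s\in\{1,\dots,2k-m+1\}$) that contain exactly $l$ falls; and $S(k,m,l)=\sum_{D} S(D,m,l)$, the sum over all Dyck $k$-paths $D$. Convention: $\binom{x}{y}=0$ for integers $x\ge 0$ and $y<0$, and $\binom{x}{y}=0$ if $y>x\ge 0$. *)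

theory Defs
  imports Main
begin

text \<open>A step is True for a rise (1,1) and False for a fall (1,-1).\<close>

definition falls :: "bool list \<Rightarrow> nat" where
  "falls xs = length (filter Not xs)"

definition rises :: "bool list \<Rightarrow> nat" where
  "rises xs = length (filter id xs)"

definition dyck_paths :: "nat \<Rightarrow> bool list set" where
  "dyck_paths k = {D. length D = 2 * k \<and> rises D = falls D \<and>
      (\<forall>i \<le> length D. falls (take i D) \<le> rises (take i D))}"

definition S_path :: "bool list \<Rightarrow> nat \<Rightarrow> nat \<Rightarrow> nat" where
  "S_path D m l = card {s. s + m \<le> length D \<and> falls (take m (drop s D)) = l}"

definition S_total :: "nat \<Rightarrow> nat \<Rightarrow> nat \<Rightarrow> nat" where
  "S_total k m l = (\<Sum>D\<in>dyck_paths k. S_path D m l)"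

definition ibinom :: "nat \<Rightarrow> int \<Rightarrow> int" where
  "ibinom n j = (if j < 0 then 0 else int (n choose nat j))"

end

theory Submission
  imports Defs
begin

lemma falls_simps[simp]: "falls [] = 0" "falls (c#xs) = (if c then falls xs else Suc (falls xs))"
  "falls (xs@ys) = falls xs + falls ys"
  by (auto simp: falls_def)
lemma rises_simps[simp]: "rises [] = 0" "rises (c#xs) = (if c then Suc (rises xs) else rises xs)"
  "rises (xs@ys) = rises xs + rises ys"
  by (auto simp: rises_def)
lemma len_rf: "length xs = rises xs + falls xs" by (induction xs) auto

definition ht :: "bool list \<Rightarrow> int" where "ht xs = int (rises xs) - int (falls xs)"
lemma ht_simps[simp]: "ht [] = 0" "ht (c#xs) = (if c then ht xs + 1 else ht xs - 1)"
  "ht (xs@ys) = ht xs + ht ys"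
  by (auto simp: ht_def)

fun dep :: "bool list \<Rightarrow> nat" where
  "dep [] = 0"
| "dep (c#xs) = (if c then dep xs - 1 else Suc (dep xs))"

lemma dep_ge_ht: "- ht xs \<le> int (dep xs)" by (induction xs) auto

lemma dep_append: "int (dep (xs@ys)) = max (int (dep xs)) (int (dep ys) - ht xs)"
  by (induction xs) auto

lemma dep_attained: "\<exists>i \<le> length xs. ht (take i xs) = - int (dep xs)"
proof (induction xs)
  case Nil then show ?case by auto
next
  case (Cons c xs)
  then obtain i where i: "i \<le> length xs" "ht (take i xs) = - int (dep xs)" by auto
  show ?case
  proof (cases "c \<and> dep xs = 0")
    case True then show ?thesis by (intro exI[of _ 0]) auto
  next
    case False then show ?thesis using i by (intro exI[of _ "Suc i"]) auto
  qed
qed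

lemma dyck_iff: "D \<in> dyck_paths k \<longleftrightarrow> length D = 2*k \<and> ht D = 0 \<and> dep D = 0"
proof
  assume "D \<in> dyck_paths k"
  hence a: "length D = 2*k" "rises D = falls D" "\<forall>i \<le> length D. falls (take i D) \<le> rises (take i D)"
    by (auto simp: dyck_paths_def)
  obtain i where "i \<le> length D" "ht (take i D) = - int (dep D)" using dep_attained by blast
  with a(3) have "dep D = 0" unfolding ht_def by force
  with a show "length D = 2*k \<and> ht D = 0 \<and> dep D = 0" by (auto simp: ht_def)
next
  assume a: "length D = 2*k \<and> ht D = 0 \<and> dep D = 0"
  have "falls (take i D) \<le> rises (take i D)" for i
  proof -
    have "int (dep (take i D @ drop i D)) \<ge> int (dep (take i D))" using dep_append[of "take i D" "drop i D"] by linarith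
    with a have "dep (take i D) = 0" by simp
    with dep_ge_ht[of "take i D"] show ?thesis by (simp add: ht_def)
  qed
  with a show "D \<in> dyck_paths k" by (auto simp: dyck_paths_def ht_def)
qed

lemma card_Suc_split:
  "card {x. length x = Suc n \<and> P x} = card {x. length x = n \<and> P (True#x)} + card {x. length x = n \<and> P (False#x)}"
proof -
  have e: "{x. length x = Suc n \<and> P x} = Cons True ` {x. length x = n \<and> P (True#x)} \<union> Cons False ` {x. length x = n \<and> P (False#x)}"
    apply (auto simp: length_Suc_conv)
    subgoal for y ys by (cases y) auto
    done
  have f: "finite {x::bool list. length x = n \<and> Q x}" for Q
    by (rule finite_subset[OF _ finite_lists_length_eq[of "UNIV::bool set" n]]) auto
  show ?thesis unfolding e
    by (subst card_Un_disjoint) (auto simp: f card_image)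
qed


lemma count_dep:
  "t = 0 \<or> 2*j \<le> n + t \<Longrightarrow> card {x. length x = n \<and> falls x = j \<and> t \<le> dep x} = (if t \<le> j then n choose (j - t) else 0)"
proof (induction n arbitrary: j t)
  case 0
  have "{x::bool list. length x = 0 \<and> falls x = j \<and> t \<le> dep x} = {x. x = [] \<and> j = 0 \<and> t = 0}" by auto
  moreover have "card {x::bool list. x = [] \<and> j = 0 \<and> t = 0} = (if j = 0 \<and> t = 0 then 1 else 0)" by simp
  ultimately have e: "card {x::bool list. length x = 0 \<and> falls x = j \<and> t \<le> dep x} = (if j = 0 \<and> t = 0 then 1 else 0)" by simp
  show ?case unfolding e using 0 by (cases "t \<le> j") (auto simp: binomial_eq_0_iff)
next
  case (Suc n)
  have c: "card {x. length x = Suc n \<and> falls x = j \<and> t \<le> dep x} =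
     card {x. length x = n \<and> falls x = j \<and> (if t = 0 then 0 else Suc t) \<le> dep x}
   + card {x. length x = n \<and> Suc (falls x) = j \<and> t \<le> Suc (dep x)}"
  proof -
    have s1: "{x. length x = n \<and> falls (True#x) = j \<and> t \<le> dep (True#x)} = {x. length x = n \<and> falls x = j \<and> (if t = 0 then 0 else Suc t) \<le> dep x}" by auto
    have s2: "{x. length x = n \<and> falls (False#x) = j \<and> t \<le> dep (False#x)} = {x. length x = n \<and> Suc (falls x) = j \<and> t \<le> Suc (dep x)}" by auto
    show ?thesis by (simp only: card_Suc_split s1 s2)
  qed
  have c1: "card {x. length x = n \<and> falls x = j \<and> (if t = 0 then 0 else Suc t) \<le> dep x}
      = (if t = 0 then n choose j else if Suc t \<le> j then n choose (j - Suc t) else 0)"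
  proof (cases "t = 0")
    case True then show ?thesis using Suc.IH[of 0 j] by simp
  next
    case False
    have pre: "Suc t = 0 \<or> 2*j \<le> n + Suc t" using Suc.prems False by auto
    show ?thesis using Suc.IH[OF pre] False by simp
  qed
  have c2: "card {x. length x = n \<and> Suc (falls x) = j \<and> t \<le> Suc (dep x)}
      = (if j = 0 then 0 else if t - 1 \<le> j - 1 then n choose (j - 1 - (t - 1)) else 0)"
  proof (cases j)
    case 0 then show ?thesis by simp
  next
    case (Suc j')
    have eq: "{x. length x = n \<and> Suc (falls x) = j \<and> t \<le> Suc (dep x)} = {x. length x = n \<and> falls x = j' \<and> t - 1 \<le> dep x}"
      using Suc by auto
    have pre: "t - 1 = 0 \<or> 2*j' \<le> n + (t - 1)" using Suc.prems Suc by auto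
    show ?thesis unfolding eq Suc.IH[OF pre] using Suc by simp
  qed
  have ar: "(if t = 0 then n choose j else if Suc t \<le> j then n choose (j - Suc t) else 0) +
     (if j = 0 then 0 else if t - 1 \<le> j - 1 then n choose (j - 1 - (t - 1)) else 0)
     = (if t \<le> j then Suc n choose (j - t) else 0)"
  proof (cases "t \<le> j")
    case True
    then obtain d where d: "j = t + d" using le_Suc_ex by blast
    show ?thesis
    proof (cases d)
      case 0 then show ?thesis using d by (cases t) auto
    next
      case (Suc d') then show ?thesis using d by (cases t) auto
    qed
  next
    case False then show ?thesis by auto
  qed
  show ?case unfolding c c1 c2 by (rule ar)
qed



lemma dep_prefix: "dep xs \<le> dep (xs @ ys)"
  using dep_append[of xs ys] by linarith

lemma ht_len: "ht xs = int (length xs) - 2 * int (falls xs)"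
  using len_rf[of xs] by (simp add: ht_def)

lemma dep_le_falls: "dep xs \<le> falls xs" by (induction xs) auto

lemma split_unique_aux:
  assumes "dep A1 = 0" "int (dep C2) = - ht C2" "C2 = C1 @ True # X" "A1 = X @ True # A2"
    "int (dep C1) = - ht C1"
  shows False
proof -
  have "dep X = 0" using dep_prefix[of X "True # A2"] assms(1,4) by simp
  hence "ht X \<ge> 0" using dep_ge_ht[of X] by simp
  moreover have "dep C1 \<le> dep C2" using dep_prefix[of C1 "True # X"] assms(3) by simp
  moreover have "ht C2 = ht C1 + 1 + ht X" using assms(3) by simp
  ultimately show False using assms(2,5) by linarith
qed

lemma split_unique:
  assumes "C1 @ True # A1 = C2 @ True # A2" "dep A1 = 0" "dep A2 = 0"
    "int (dep C1) = - ht C1" "int (dep C2) = - ht C2"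
  shows "C1 = C2 \<and> A1 = A2"
proof -
  obtain us where "(C1 = C2 @ us \<and> us @ True # A1 = True # A2) \<or> (C1 @ us = C2 \<and> True # A1 = us @ True # A2)"
    using assms(1) append_eq_append_conv2[of C1 "True # A1" C2 "True # A2"] by blast
  then show ?thesis
  proof
    assume h: "C1 = C2 @ us \<and> us @ True # A1 = True # A2"
    show ?thesis
    proof (cases us)
      case Nil then show ?thesis using h by simp
    next
      case (Cons u us')
      with h have "C1 = C2 @ True # us'" "A2 = us' @ True # A1" by auto
      with split_unique_aux[of A2 C1 C2 us' A1] assms show ?thesis by blast
    qed
  next
    assume h: "C1 @ us = C2 \<and> True # A1 = us @ True # A2"
    show ?thesis
    proof (cases us)
      case Nil then show ?thesis using h by simp
    next
      case (Cons u us')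
      with h have "C2 = C1 @ True # us'" "A1 = us' @ True # A2" by auto
      with split_unique_aux[of A1 C2 C1 us' A2] assms show ?thesis by blast
    qed
  qed
qed

lemma split_exists:
  "- ht R < int (dep R) \<Longrightarrow> \<exists>C A. R = C @ True # A \<and> dep A = 0 \<and> int (dep C) = - ht C"
proof (induction R)
  case Nil then show ?case by simp
next
  case (Cons x R)
  show ?case
  proof (cases "- ht R < int (dep R)")
    case True
    then obtain C A where ca: "R = C @ True # A" "dep A = 0" "int (dep C) = - ht C" using Cons.IH by blast
    show ?thesis
    proof (cases "x \<and> dep C = 0")
      case True
      have "int (dep R) = 0" using ca True dep_append[of C "True # A"] by simp
      then show ?thesis using True by (intro exI[of _ "[]"] exI[of _ R]) simp
    next
      case False
      then show ?thesis using ca by (intro exI[of _ "x # C"] exI[of _ A]) auto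
    qed
  next
    case False
    hence f: "int (dep R) = - ht R" using dep_ge_ht[of R] by linarith
    have "x \<and> dep R = 0" using Cons.prems f by (cases x) auto
    then show ?thesis by (intro exI[of _ "[]"] exI[of _ R]) simp
  qed
qed

lemma dyck_split:
  assumes "dep (A@B@C) = 0" "ht (A@B@C) = 0"
  shows "dep A = 0 \<and> int (dep B) \<le> ht A \<and> int (dep C) = - ht C \<and> int (dep (C @ True # A)) = - ht C"
proof -
  have 1: "int (dep (A@(B@C))) = max (int (dep A)) (int (dep (B@C)) - ht A)" by (rule dep_append)
  have 2: "int (dep (B@C)) = max (int (dep B)) (int (dep C) - ht B)" by (rule dep_append)
  have 3: "int (dep (C@(True#A))) = max (int (dep C)) (int (dep (True # A)) - ht C)" by (rule dep_append)
  have "dep A = 0" using 1 assms by linarith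
  moreover have "int (dep B) \<le> ht A" "int (dep C) \<le> - ht C" using 1 2 assms by auto
  moreover have "- ht C \<le> int (dep C)" by (rule dep_ge_ht)
  ultimately show ?thesis using 3 by auto
qed

lemma dyck_join:
  assumes "dep A = 0" "int (dep C) = - ht C" "int (dep B) \<le> ht A" "ht A + ht B + ht C = 0"
  shows "dep (A@B@C) = 0"
proof -
  have 1: "int (dep (A@(B@C))) = max (int (dep A)) (int (dep (B@C)) - ht A)" by (rule dep_append)
  have 2: "int (dep (B@C)) = max (int (dep B)) (int (dep C) - ht B)" by (rule dep_append)
  show ?thesis using 1 2 assms by auto
qed

lemma dep_R: "dep A = 0 \<Longrightarrow> int (dep C) = - ht C \<Longrightarrow> int (dep (C @ True # A)) = - ht C"
  using dep_append[of C "True # A"] by auto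



lemma card_PQ:
  assumes lm: "2*l \<le> m" and mk: "m \<le> 2*k"
  shows "S_total k m l = card (SIGMA B:{B. length B = m \<and> falls B = l}.
            {R. length R = 2*k-m+1 \<and> falls R = k - l \<and> (m - 2*l) + dep B \<le> dep R})"
    (is "_ = card ?Q")
proof -
  define P where "P = (SIGMA D:dyck_paths k. {s. s + m \<le> length D \<and> falls (take m (drop s D)) = l})"
  define \<Phi> where "\<Phi> = (\<lambda>(D::bool list,s::nat). (take m (drop s D), drop (s+m) D @ True # take s D))"
  have fin_dyck: "finite (dyck_paths k)"
    by (rule finite_subset[OF _ finite_lists_length_eq[of "UNIV::bool set" "2*k"]]) (auto simp: dyck_paths_def)
  have "S_total k m l = card P" unfolding S_total_def S_path_def P_def
  proof -
    have "finite {s. s + m \<le> length D \<and> falls (take m (drop s D)) = l}" for D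
      by (rule finite_subset[of _ "{..length D}"]) auto
    then show "(\<Sum>D\<in>dyck_paths k. card {s. s + m \<le> length D \<and> falls (take m (drop s D)) = l}) =
      card (SIGMA D:dyck_paths k. {s. s + m \<le> length D \<and> falls (take m (drop s D)) = l})"
      by (subst card_SigmaI) (auto simp: fin_dyck)
  qed
  also have "card P = card ?Q"
  proof (rule bij_betw_same_card, rule bij_betw_imageI)
    have memP: "D \<in> dyck_paths k \<and> s + m \<le> length D \<and> falls B = l \<and>
         D = A @ B @ C \<and> length A = s \<and> length B = m \<and> dep A = 0 \<and> int (dep B) \<le> ht A \<and>
         int (dep C) = - ht C \<and> int (dep (C @ True # A)) = - ht C \<and> length D = 2*k \<and> ht D = 0"
      if "(D, s) \<in> P" "A = take s D" "B = take m (drop s D)" "C = drop (s+m) D" for D s A B C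
    proof -
      have d: "D \<in> dyck_paths k" "s + m \<le> length D" "falls (take m (drop s D)) = l"
        using that(1) by (auto simp: P_def)
      have eq: "D = A @ B @ C" using that(2-4)
        by (metis append_take_drop_id drop_drop add.commute)
      have dd: "length D = 2*k" "ht D = 0" "dep D = 0" using d(1) dyck_iff by auto
      have "dep A = 0 \<and> int (dep B) \<le> ht A \<and> int (dep C) = - ht C \<and> int (dep (C @ True # A)) = - ht C"
        using dyck_split[of A B C] dd(2,3) unfolding eq by blast
      moreover have "length A = s" "length B = m" "falls B = l" using that(2,3) d(2,3) by auto
      ultimately show ?thesis using d dd eq by blast
    qed
    show "inj_on \<Phi> P"
    proof (rule inj_onI)
      fix x y assume xy: "x \<in> P" "y \<in> P" "\<Phi> x = \<Phi> y"
      obtain D1 s1 where x: "x = (D1, s1)" by force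
      obtain D2 s2 where y: "y = (D2, s2)" by force
      note p1 = memP[of D1 s1 "take s1 D1" "take m (drop s1 D1)" "drop (s1+m) D1", OF xy(1)[unfolded x]]
      note p2 = memP[of D2 s2 "take s2 D2" "take m (drop s2 D2)" "drop (s2+m) D2", OF xy(2)[unfolded y]]
      have e1: "take m (drop s1 D1) = take m (drop s2 D2)"
        and e2: "drop (s1+m) D1 @ True # take s1 D1 = drop (s2+m) D2 @ True # take s2 D2"
        using xy(3) unfolding x y \<Phi>_def by auto
      have "drop (s1+m) D1 = drop (s2+m) D2 \<and> take s1 D1 = take s2 D2"
        by (rule split_unique[OF e2]) (use p1 p2 in blast)+
      then have hc: "drop (s1+m) D1 = drop (s2+m) D2" and ht: "take s1 D1 = take s2 D2" by blast+
      have l1: "length (take s1 D1) = s1" using p1 by blast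
      have l2: "length (take s2 D2) = s2" using p2 by blast
      have "s1 = s2" using l1 l2 ht by simp
      have "D1 = take s1 D1 @ take m (drop s1 D1) @ drop (s1+m) D1" using p1 by blast
      also have "\<dots> = take s2 D2 @ take m (drop s2 D2) @ drop (s2+m) D2" using ht e1 hc by simp
      also have "\<dots> = D2" by (metis p2)
      finally have "D1 = D2" .
      then show "x = y" using x y \<open>s1 = s2\<close> by simp
    qed
    show "\<Phi> ` P = ?Q"
    proof
      show "\<Phi> ` P \<subseteq> ?Q"
      proof
        fix z assume "z \<in> \<Phi> ` P"
        then obtain D s where ds: "(D, s) \<in> P" "z = \<Phi> (D, s)" by auto
        define A where "A = take s D"
        define B where "B = take m (drop s D)"
        define C where "C = drop (s+m) D"
        note p = memP[OF ds(1) A_def B_def C_def]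
        have z: "z = (B, C @ True # A)" using ds(2) by (simp add: \<Phi>_def A_def B_def C_def)
        have pl: "length D = 2*k" "ht D = 0" using p by blast+
        have "falls D = k" using pl ht_len[of D] by simp
        then have fR: "falls (C @ True # A) = k - l" using p by simp
        have pe: "D = A @ B @ C" "length B = m" using p by blast+
        have "length D = length A + length B + length C" using pe(1) by simp
        then have lR: "length (C @ True # A) = 2*k - m + 1" using pl pe(2) by simp
        have "ht B = int (m - 2*l)" using p ht_len[of B] lm by simp
        moreover have "ht A + ht B + ht C = 0" using pe(1) pl(2) by simp
        moreover have "int (dep B) \<le> ht A" "int (dep (C @ True # A)) = - ht C" using p by blast+
        ultimately have "int (m - 2*l + dep B) \<le> int (dep (C @ True # A))" by simp
        then show "z \<in> ?Q" using z fR lR p by simp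
      qed
    next
      show "?Q \<subseteq> \<Phi> ` P"
      proof
        fix z assume "z \<in> ?Q"
        then obtain B R where z: "z = (B, R)" and b: "length B = m" "falls B = l"
          and r: "length R = 2*k-m+1" "falls R = k - l" "m - 2*l + dep B \<le> dep R" by auto
        have hB: "ht B = int m - 2 * int l" using ht_len[of B] b by simp
        have hR: "ht R = 1 - int m + 2 * int l" using ht_len[of R] r lm mk by simp
        have "- ht R < int (dep R)" using r(3) hR lm by linarith
        then obtain C A where ca: "R = C @ True # A" "dep A = 0" "int (dep C) = - ht C"
          using split_exists by blast
        define D where "D = A @ B @ C"
        have dR: "int (dep R) = - ht C" using dep_R[OF ca(2,3)] ca(1) by simp
        have hsum: "ht A + ht B + ht C = 0" using hR hB ca(1) by simp
        have "int (dep B) \<le> ht A" using dR hsum r(3) hB lm by linarith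
        then have dD: "dep D = 0" unfolding D_def using dyck_join ca hsum by blast
        have lD: "length D = 2*k" using r(1) ca(1) b mk by (simp add: D_def)
        have "D \<in> dyck_paths k" using dD lD hsum by (simp add: dyck_iff D_def)
        then have "(D, length A) \<in> P" using b lD by (simp add: P_def D_def)
        moreover have "\<Phi> (D, length A) = z" using z ca(1) b by (simp add: \<Phi>_def D_def)
        ultimately show "z \<in> \<Phi> ` P" by force
      qed
    qed
  qed
  finally show ?thesis .
qed



lemma ibinom_sym: "x + y = int n \<Longrightarrow> ibinom n x = ibinom n y"
proof -
  assume s: "x + y = int n"
  show ?thesis
  proof (cases "x < 0")
    case True
    then have "nat y > n" using s by linarith
    then show ?thesis using True s by (simp add: ibinom_def binomial_eq_0)
  next
    case False
    show ?thesis
    proof (cases "y < 0")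
      case True
      then have "nat x > n" using s by linarith
      then show ?thesis using True False s by (simp add: ibinom_def binomial_eq_0)
    next
      case False2: False
      then have "nat y = n - nat x" "nat x \<le> n" using s False by linarith+
      then show ?thesis using False False2 by (simp add: ibinom_def binomial_symmetric[symmetric])
    qed
  qed
qed

lemma tele:
  fixes g :: "nat \<Rightarrow> int"
  assumes "d \<le> L"
  shows "g d = g 0 + (\<Sum>i<L. if i < d then g (Suc i) - g i else 0)"
proof -
  have "{i \<in> {..<L}. i < d} = {..<d}" using assms by auto
  then have "(\<Sum>i<L. if i < d then g (Suc i) - g i else 0) = (\<Sum>i<d. g (Suc i) - g i)"
    using sum.inter_filter[of "{..<L}" "\<lambda>i. g (Suc i) - g i" "\<lambda>i. i < d"] by simp
  also have "\<dots> = g d - g 0" by (rule sum_lessThan_telescope)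
  finally show ?thesis by simp
qed

theorem mainTheorem2:
  fixes k m l :: nat
  assumes "2 * l \<le> m" and "m \<le> 2 * k"
  shows "int (S_total k m l) =
           int (m choose l) * ibinom (2 * k - m + 1) (int k - int m + int l)
         + (\<Sum>d'<l. int (m choose d') *
              (ibinom (2 * k - m + 1) (int k + 1 - int d') - ibinom (2 * k - m + 1) (int k - int d')))"
proof -
  define n where "n = 2 * k - m + 1"
  define Bs where "Bs = {B. length B = m \<and> falls B = l}"
  define g where "g = (\<lambda>a::nat. ibinom n (int k - int m + int l - int a))"
  have finL: "finite {x::bool list. length x = N \<and> Q x}" for N Q
    by (rule finite_subset[OF _ finite_lists_length_eq[of "UNIV::bool set" N]]) auto
  have finB: "finite Bs" unfolding Bs_def using finL by simp
  have "S_total k m l = card (SIGMA B:Bs. {R. length R = n \<and> falls R = k - l \<and> (m - 2*l) + dep B \<le> dep R})"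
    unfolding Bs_def n_def by (rule card_PQ[OF assms])
  also have "\<dots> = (\<Sum>B\<in>Bs. card {R. length R = n \<and> falls R = k - l \<and> (m - 2*l) + dep B \<le> dep R})"
    by (rule card_SigmaI) (use finB finL in auto)
  finally have s1: "int (S_total k m l) = (\<Sum>B\<in>Bs. int (card {R. length R = n \<and> falls R = k - l \<and> (m - 2*l) + dep B \<le> dep R}))"
    by simp
  have s2: "int (card {R. length R = n \<and> falls R = k - l \<and> (m - 2*l) + dep B \<le> dep R}) = g (dep B)" for B
  proof -
    have pre: "m - 2*l + dep B = 0 \<or> 2 * (k - l) \<le> n + (m - 2*l + dep B)"
      using assms unfolding n_def by linarith
    show ?thesis
    proof (cases "m - 2*l + dep B \<le> k - l")
      case True
      then have e: "k - l - (m - 2*l + dep B) = nat (int k - int m + int l - int (dep B))"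
        and nn: "\<not> int k - int m + int l - int (dep B) < 0" using assms by linarith+
      show ?thesis unfolding count_dep[OF pre] g_def ibinom_def using True nn e by simp
    next
      case False
      then have "int k - int m + int l - int (dep B) < 0" using assms by linarith
      then show ?thesis unfolding count_dep[OF pre] g_def ibinom_def using False by simp
    qed
  qed
  have s3: "(\<Sum>B\<in>Bs. g (dep B)) = (\<Sum>B\<in>Bs. g 0 + (\<Sum>i<l. if i < dep B then g (Suc i) - g i else 0))"
  proof (rule sum.cong[OF refl])
    fix B assume "B \<in> Bs"
    then have "dep B \<le> l" using dep_le_falls[of B] by (simp add: Bs_def)
    then show "g (dep B) = g 0 + (\<Sum>i<l. if i < dep B then g (Suc i) - g i else 0)" by (rule tele)
  qed
  have cBs: "card Bs = m choose l"
  proof -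
    have "Bs = {B. length B = m \<and> falls B = l \<and> 0 \<le> dep B}" by (simp add: Bs_def)
    then show ?thesis using count_dep[of 0 l m] by simp
  qed
  have cnt: "(\<Sum>B\<in>Bs. if i < dep B then h else 0) = int (m choose (l - Suc i)) * h" if "i < l" for i h
  proof -
    have "(\<Sum>B\<in>Bs. if i < dep B then h else 0) = (\<Sum>B\<in>{B\<in>Bs. i < dep B}. h)"
      using sum.inter_filter[OF finB, of "\<lambda>_. h" "\<lambda>B. i < dep B"] by simp
    also have "\<dots> = int (card {B\<in>Bs. i < dep B}) * h" by simp
    also have "{B\<in>Bs. i < dep B} = {B. length B = m \<and> falls B = l \<and> Suc i \<le> dep B}"
      by (auto simp: Bs_def)
    also have "card \<dots> = m choose (l - Suc i)"
      using count_dep[of "Suc i" l m] that assms by simp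
    finally show ?thesis .
  qed
  have s4: "(\<Sum>B\<in>Bs. g 0 + (\<Sum>i<l. if i < dep B then g (Suc i) - g i else 0))
      = int (m choose l) * g 0 + (\<Sum>i<l. int (m choose (l - Suc i)) * (g (Suc i) - g i))"
  proof -
    have "(\<Sum>B\<in>Bs. \<Sum>i<l. if i < dep B then g (Suc i) - g i else 0) =
        (\<Sum>i<l. \<Sum>B\<in>Bs. if i < dep B then g (Suc i) - g i else 0)" by (rule sum.swap)
    also have "\<dots> = (\<Sum>i<l. int (m choose (l - Suc i)) * (g (Suc i) - g i))"
      by (rule sum.cong[OF refl]) (simp add: cnt)
    finally show ?thesis by (simp add: sum.distrib cBs)
  qed
  have s5: "(\<Sum>i<l. int (m choose (l - Suc i)) * (g (Suc i) - g i)) =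
      (\<Sum>d'<l. int (m choose d') * (ibinom n (int k + 1 - int d') - ibinom n (int k - int d')))"
  proof -
    have "(\<Sum>i<l. int (m choose (l - Suc i)) * (g (Suc i) - g i)) =
       (\<Sum>i<l. (\<lambda>d'. int (m choose d') * (ibinom n (int k + 1 - int d') - ibinom n (int k - int d'))) (l - Suc i))"
    proof (rule sum.cong[OF refl])
      fix i assume "i \<in> {..<l}"
      then have il: "i < l" by simp
      have a: "g (Suc i) = ibinom n (int k + 1 - int (l - Suc i))" unfolding g_def
        by (rule ibinom_sym) (use il assms in \<open>simp add: n_def of_nat_diff\<close>)
      have b: "g i = ibinom n (int k - int (l - Suc i))" unfolding g_def
        by (rule ibinom_sym) (use il assms in \<open>simp add: n_def of_nat_diff\<close>)
      show "int (m choose (l - Suc i)) * (g (Suc i) - g i) =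
        (\<lambda>d'. int (m choose d') * (ibinom n (int k + 1 - int d') - ibinom n (int k - int d'))) (l - Suc i)"
        by (simp add: a b)
    qed
    also have "\<dots> = (\<Sum>d'<l. int (m choose d') * (ibinom n (int k + 1 - int d') - ibinom n (int k - int d')))"
      by (rule sum.nat_diff_reindex)
    finally show ?thesis .
  qed
  have "int (S_total k m l) = (\<Sum>B\<in>Bs. g (dep B))" unfolding s1 s2 ..
  also have "\<dots> = int (m choose l) * g 0 + (\<Sum>i<l. int (m choose (l - Suc i)) * (g (Suc i) - g i))"
    using s3 s4 by simp
  also have "\<dots> = int (m choose l) * ibinom n (int k - int m + int l)
         + (\<Sum>d'<l. int (m choose d') * (ibinom n (int k + 1 - int d') - ibinom n (int k - int d')))"
    unfolding s5 by (simp add: g_def)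
  finally show ?thesis unfolding n_def .
qed


end
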